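(* Let $n\ge 1$ and let $L\subseteq\Sigma^*$ be a finite or cofinite regular language with state complexity $n$. Then the syntactic complexity of $L$ satisfies $\sigma(L)\le (n-1)!$. Moreover, this bound is tight: for every $n\ge 1$ there exist an alphabet $\Sigma$ and a finite language $L\subseteq\Sigma^*$ with state complexity $n$ and $\sigma(L)=(n-1)!$.
   Context: A language $L\subseteq\Sigma^*$ over a finite non-empty alphabet $\Sigma$ is cofinite if its complement $\Sigma^*\setminus L$ is finite. The state complexity of a regular language $L$ is the number of states of its minimal deterministic finite automaton (DFA). The syntactic (Myhill) congruence of $L$ is defined on $\Sigma^*$ by $x\approx_L y$ iff for all $u,v\in\Sigma^*$, $uxv\in L \Leftrightarrow uyv\in L$. The syntactic semigroup of $L$ is $\Sigma^+/\approx_L$. The syntactic complexity $\sigma(L)$ is the cardinality of the syntactic semigroup of $L$; equivalently, it is the number of distinct transformations of the state set of the minimal DFA of $L$ induced by non-empty words. *)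

theory Defs
  imports Main
begin

definition left_quotient :: "'a set \<Rightarrow> 'a list set \<Rightarrow> 'a list \<Rightarrow> 'a list set" where
  "left_quotient A L w = {v \<in> lists A. w @ v \<in> L}"

text \<open>State complexity: number of states of the minimal complete DFA of L,
  i.e. the number of distinct left left_quotients (Myhill--Nerode classes).\<close>
definition state_complexity :: "'a set \<Rightarrow> 'a list set \<Rightarrow> nat" where
  "state_complexity A L = card (left_quotient A L ` lists A)"

definition regular_lang :: "'a set \<Rightarrow> 'a list set \<Rightarrow> bool" where
  "regular_lang A L \<longleftrightarrow> L \<subseteq> lists A \<and> finite (left_quotient A L ` lists A)"

definition syntactic_cong :: "'a set \<Rightarrow> 'a list set \<Rightarrow> ('a list \<times> 'a list) set" where
  "syntactic_cong A L = {(x, y). x \<in> lists A \<and> y \<in> lists A \<and>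
     (\<forall>u \<in> lists A. \<forall>v \<in> lists A. (u @ x @ v \<in> L \<longleftrightarrow> u @ y @ v \<in> L))}"

text \<open>Syntactic complexity: cardinality of the syntactic semigroup A^+ / ~_L.\<close>
definition syntactic_complexity :: "'a set \<Rightarrow> 'a list set \<Rightarrow> nat" where
  "syntactic_complexity A L = card ((lists A - {[]}) // syntactic_cong A L)"

definition cofinite_lang :: "'a set \<Rightarrow> 'a list set \<Rightarrow> bool" where
  "cofinite_lang A L \<longleftrightarrow> finite (lists A - L)"

end

theory Submission
  imports Defs "HOL-Library.FuncSet"
begin

lemma count_lemma:
  fixes h :: "'b \<Rightarrow> nat"
  shows "finite Q \<Longrightarrow> z \<in> Q \<Longrightarrow> card Q = n \<Longrightarrow>
    (\<Prod>K\<in>Q-{z}. card {K'\<in>Q. h K' < h K}) \<le> fact (n - 1)"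
proof (induction n arbitrary: Q)
  case 0
  then show ?case by auto
next
  case (Suc m)
  show ?case
  proof (cases "Q - {z} = {}")
    case True
    then show ?thesis by (simp add: True)
  next
    case False
    have fin: "finite (Q - {z})" using Suc.prems by simp
    obtain mx where mx: "mx \<in> Q - {z}" "h mx = Max (h ` (Q - {z}))"
      using False fin by (metis (no_types, lifting) Max_in finite_imageI image_iff image_is_empty)
    have mxge: "\<And>K. K \<in> Q - {z} \<Longrightarrow> h K \<le> h mx"
      using mx fin by simp
    define Q' where "Q' = Q - {mx}"
    have cQ': "card Q' = m" using Suc.prems mx by (simp add: Q'_def)
    have IH: "(\<Prod>K\<in>Q'-{z}. card {K'\<in>Q'. h K' < h K}) \<le> fact (m - 1)"
      using Suc.IH[of Q'] Suc.prems mx cQ' unfolding Q'_def by auto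
    have eq: "(\<Prod>K\<in>Q'-{z}. card {K'\<in>Q. h K' < h K}) = (\<Prod>K\<in>Q'-{z}. card {K'\<in>Q'. h K' < h K})"
    proof (rule prod.cong)
      fix K assume K: "K \<in> Q' - {z}"
      then have "h K \<le> h mx" using mxge by (simp add: Q'_def)
      then have "{K'\<in>Q. h K' < h K} = {K'\<in>Q'. h K' < h K}" by (auto simp: Q'_def)
      then show "card {K'\<in>Q. h K' < h K} = card {K'\<in>Q'. h K' < h K}" by simp
    qed simp
    have split: "Q - {z} = insert mx (Q' - {z})" using mx by (auto simp: Q'_def)
    have "(\<Prod>K\<in>Q-{z}. card {K'\<in>Q. h K' < h K}) =
          card {K'\<in>Q. h K' < h mx} * (\<Prod>K\<in>Q'-{z}. card {K'\<in>Q. h K' < h K})"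
      unfolding split using fin by (subst prod.insert) (auto simp: Q'_def)
    also have "\<dots> \<le> m * fact (m - 1)"
    proof (rule mult_mono)
      have "{K'\<in>Q. h K' < h mx} \<subseteq> Q'" by (auto simp: Q'_def)
      then show "card {K'\<in>Q. h K' < h mx} \<le> m"
        using cQ' Suc.prems by (metis card_mono finite_Diff Q'_def)
    qed (use IH eq in auto)
    also have "\<dots> = fact m"
    proof -
      have "card {z, mx} \<le> card Q" using Suc.prems mx by (intro card_mono) auto
      then have "m \<ge> 1" using mx Suc.prems by auto
      then show ?thesis using fact_reduce[of m, where 'a=nat] by simp
    qed
    finally show ?thesis by simp
  qed
qed

definition fq :: "'a list \<Rightarrow> 'a list set \<Rightarrow> 'a list set" where
  "fq x K = {v. x @ v \<in> K}"

definition hgt :: "'a list set \<Rightarrow> nat" where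
  "hgt K = (if K = {} then 0 else Suc (Max (length ` K)))"

lemma lq_append:
  assumes "x \<in> lists A"
  shows "left_quotient A L (u @ x) = fq x (left_quotient A L u)"
  using assms by (auto simp: left_quotient_def fq_def)

lemma lq_finite:
  assumes "finite L"
  shows "finite (left_quotient A L w)"
proof -
  have "left_quotient A L w \<subseteq> (\<lambda>u. drop (length w) u) ` L"
    by (auto simp: left_quotient_def image_iff) (metis append_eq_conv_conj)
  then show ?thesis using assms finite_subset by blast
qed

lemma fq_finite: "finite K \<Longrightarrow> finite (fq x K)"
proof -
  assume "finite K"
  have "fq x K \<subseteq> (\<lambda>u. drop (length x) u) ` K"
    by (auto simp: fq_def image_iff) (metis append_eq_conv_conj)
  then show ?thesis using \<open>finite K\<close> finite_subset by blast
qed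

lemma hgt_fq:
  assumes "finite K" "K \<noteq> {}" "x \<noteq> []"
  shows "hgt (fq x K) < hgt K"
proof (cases "fq x K = {}")
  case True
  then show ?thesis using assms by (simp add: hgt_def)
next
  case False
  have fin: "finite (fq x K)" using assms fq_finite by blast
  obtain v where v: "v \<in> fq x K" "length v = Max (length ` fq x K)"
    using False fin by (metis (no_types, lifting) Max_in finite_imageI image_iff image_is_empty)
  have "x @ v \<in> K" using v by (simp add: fq_def)
  then have "length (x @ v) \<le> Max (length ` K)" using assms by (intro Max_ge) (auto intro: imageI simp del: length_append)
  moreover have "length v < length (x @ v)" using assms by (cases x) auto
  ultimately have "Max (length ` fq x K) < Max (length ` K)" using v(2) by linarith
  then show ?thesis using False assms by (simp add: hgt_def)
qed

lemma part1_finite: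
  fixes A :: "'a set" and L :: "'a list set"
  assumes LA: "L \<subseteq> lists A" and finL: "finite L" and Ane: "A \<noteq> {}"
    and finQ: "finite (left_quotient A L ` lists A)"
  shows "finite ((lists A - {[]}) // syntactic_cong A L) \<and>
         syntactic_complexity A L \<le> fact (state_complexity A L - 1)"
proof -
  define Q where "Q = left_quotient A L ` lists A"
  define R where "R = syntactic_cong A L"
  have fQ: "finite Q" using finQ Q_def by simp
  have emp: "{} \<in> Q"
  proof -
    obtain a where a: "a \<in> A" using Ane by auto
    define M where "M = Suc (Max (length ` L))"
    have "left_quotient A L (replicate M a) = {}"
    proof -
      { fix v assume "replicate M a @ v \<in> L"
        then have "length (replicate M a @ v) \<le> Max (length ` L)" using finL by (intro Max_ge) (auto intro: imageI simp del: length_append)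
        then have False by (simp add: M_def) }
      then show ?thesis by (auto simp: left_quotient_def)
    qed
    moreover have "replicate M a \<in> lists A" using a by auto
    ultimately show ?thesis unfolding Q_def by (metis image_eqI)
  qed
  define S where "S K = (if K = {} then {{}} else {K'\<in>Q. hgt K' < hgt K})" for K :: "'a list set"
  define tr where "tr x = restrict (fq x) Q" for x
  define T where "T = tr ` (lists A - {[]})"
  have TS: "T \<subseteq> PiE Q S"
  proof
    fix t assume "t \<in> T"
    then obtain x where x: "x \<in> lists A" "x \<noteq> []" "t = tr x" by (auto simp: T_def)
    show "t \<in> PiE Q S" unfolding x tr_def
    proof (unfold restrict_PiE_iff, intro ballI)
      fix K assume K: "K \<in> Q"
      then obtain u where u: "u \<in> lists A" "K = left_quotient A L u" by (auto simp: Q_def)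
      have inQ: "fq x K \<in> Q" using lq_append[OF x(1), of L u] u x(1)
        unfolding Q_def by (metis append_in_lists_conv image_eqI)
      show "fq x K \<in> S K"
      proof (cases "K = {}")
        case True
        then show ?thesis by (simp add: S_def fq_def)
      next
        case False
        have "finite K" using u lq_finite[OF finL] by simp
        then show ?thesis using hgt_fq[OF _ False x(2)] inQ False by (simp add: S_def)
      qed
    qed
  qed
  have finS: "finite (S K)" for K
    unfolding S_def using fQ by (cases "K = {}") auto
  have fT: "finite T" by (rule finite_subset[OF TS finite_PiE[OF fQ finS]])
  have cT: "card T \<le> fact (card Q - 1)"
  proof -
    have "card T \<le> card (PiE Q S)" by (rule card_mono[OF finite_PiE[OF fQ finS] TS])
    also have "\<dots> = (\<Prod>K\<in>Q. card (S K))" by (rule card_PiE[OF fQ])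
    also have "\<dots> = card (S {}) * (\<Prod>K\<in>Q-{{}}. card (S K))"
      using prod.remove[OF fQ emp] by simp
    also have "\<dots> = (\<Prod>K\<in>Q-{{}}. card {K'\<in>Q. hgt K' < hgt K})"
    proof -
      have "card (S {}) = 1" by (simp add: S_def)
      moreover have "(\<Prod>K\<in>Q-{{}}. card (S K)) = (\<Prod>K\<in>Q-{{}}. card {K'\<in>Q. hgt K' < hgt K})"
        by (rule prod.cong) (auto simp: S_def)
      ultimately show ?thesis by simp
    qed
    also have "\<dots> \<le> fact (card Q - 1)" using count_lemma[OF fQ emp] by simp
    finally show ?thesis .
  qed
  have cls: "R `` {x} = R `` {y}" if "x \<in> lists A" "y \<in> lists A" "tr x = tr y" for x y
  proof -
    have key: "u @ x @ v \<in> L \<longleftrightarrow> u @ y @ v \<in> L" if uv: "u \<in> lists A" "v \<in> lists A" for u v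
    proof -
      have "left_quotient A L u \<in> Q" using uv by (simp add: Q_def)
      then have "fq x (left_quotient A L u) = fq y (left_quotient A L u)"
        using \<open>tr x = tr y\<close> unfolding tr_def by (metis restrict_apply')
      then have "left_quotient A L (u @ x) = left_quotient A L (u @ y)"
        using lq_append[OF \<open>x \<in> lists A\<close>] lq_append[OF \<open>y \<in> lists A\<close>] by simp
      then have "v \<in> left_quotient A L (u @ x) \<longleftrightarrow> v \<in> left_quotient A L (u @ y)" by simp
      then show ?thesis using uv by (simp add: left_quotient_def)
    qed
    have "(x, z) \<in> R \<longleftrightarrow> (y, z) \<in> R" for z
      unfolding R_def syntactic_cong_def using key that(1,2) by blast
    then show ?thesis by blast
  qed
  define g where "g t = R `` {SOME x. x \<in> lists A - {[]} \<and> tr x = t}" for t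
  have sub: "(lists A - {[]}) // R \<subseteq> g ` T"
  proof
    fix C assume "C \<in> (lists A - {[]}) // R"
    then obtain x where x: "x \<in> lists A - {[]}" "C = R `` {x}" by (auto simp: quotient_def)
    have ex: "\<exists>y. y \<in> lists A - {[]} \<and> tr y = tr x" using x by blast
    define y where "y = (SOME y. y \<in> lists A - {[]} \<and> tr y = tr x)"
    have y: "y \<in> lists A - {[]}" "tr y = tr x" using someI_ex[OF ex] by (auto simp: y_def)
    have "g (tr x) = R `` {y}" by (simp add: g_def y_def)
    also have "\<dots> = C" using cls[of y x] x y by auto
    finally show "C \<in> g ` T" using x by (auto simp: T_def)
  qed
  have fin2: "finite ((lists A - {[]}) // R)" by (rule finite_subset[OF sub finite_imageI[OF fT]])
  have "card ((lists A - {[]}) // R) \<le> card (g ` T)" by (rule card_mono[OF finite_imageI[OF fT] sub])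
  also have "\<dots> \<le> card T" by (rule card_image_le[OF fT])
  finally have "card ((lists A - {[]}) // R) \<le> fact (card Q - 1)" using cT by simp
  then show ?thesis using fin2
    by (simp add: syntactic_complexity_def state_complexity_def R_def Q_def)
qed


lemma cong_compl:
  assumes "L \<subseteq> lists A"
  shows "syntactic_cong A (lists A - L) = syntactic_cong A L"
  unfolding syntactic_cong_def by auto

lemma lq_compl:
  assumes "w \<in> lists A"
  shows "left_quotient A (lists A - L) w = lists A - left_quotient A L w"
  using assms unfolding left_quotient_def by auto

lemma Q_compl:
  "left_quotient A (lists A - L) ` lists A = (\<lambda>K. lists A - K) ` (left_quotient A L ` lists A)"
proof -
  have "left_quotient A (lists A - L) ` lists A = (\<lambda>w. lists A - left_quotient A L w) ` lists A"
    by (rule image_cong) (auto simp: lq_compl)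
  then show ?thesis by (simp add: image_image)
qed

lemma inj_compl: "inj_on (\<lambda>K. lists A - K) (left_quotient A L ` lists A)"
proof (rule inj_onI)
  fix x y assume "x \<in> left_quotient A L ` lists A" "y \<in> left_quotient A L ` lists A"
    "lists A - x = lists A - y"
  moreover have "\<And>K. K \<in> left_quotient A L ` lists A \<Longrightarrow> K \<subseteq> lists A"
    by (auto simp: left_quotient_def)
  ultimately show "x = y" by blast
qed

lemma part1:
  fixes A :: "'a set" and L :: "'a list set"
  assumes "finite A" "A \<noteq> {}" "L \<subseteq> lists A" "regular_lang A L"
    "finite L \<or> cofinite_lang A L"
  shows "syntactic_complexity A L \<le> fact (state_complexity A L - 1)"
proof -
  have finQ: "finite (left_quotient A L ` lists A)" using assms by (simp add: regular_lang_def)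
  show ?thesis
  proof (cases "finite L")
    case True
    then show ?thesis using part1_finite[OF assms(3) True assms(2) finQ] by simp
  next
    case False
    then have fin': "finite (lists A - L)" using assms(5) by (simp add: cofinite_lang_def)
    have finQ': "finite (left_quotient A (lists A - L) ` lists A)"
      unfolding Q_compl using finQ by simp
    have "syntactic_complexity A (lists A - L) \<le> fact (state_complexity A (lists A - L) - 1)"
      using part1_finite[OF _ fin' assms(2) finQ'] by simp
    moreover have "syntactic_complexity A (lists A - L) = syntactic_complexity A L"
      by (simp add: syntactic_complexity_def cong_compl[OF assms(3)])
    moreover have "state_complexity A (lists A - L) = state_complexity A L"
      unfolding state_complexity_def Q_compl using card_image[OF inj_compl] by simp
    ultimately show ?thesis by simp
  qed
qed


lemma prod_rev_fact: "(\<Prod>i<m. (m - i)) = fact m"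
proof (induction m)
  case 0 then show ?case by simp
next
  case (Suc k)
  have "(\<Prod>i<Suc k. (Suc k - i)) = Suc k * (\<Prod>i<k. (Suc k - Suc i))"
    by (subst prod.lessThan_Suc_shift) simp
  also have "\<dots> = Suc k * fact k" using Suc by simp
  finally show ?case by simp
qed

lemma part2:
  assumes n1: "n \<ge> 1"
  shows "\<exists>(A :: nat set) (L :: nat list set).
               finite A \<and> A \<noteq> {} \<and> L \<subseteq> lists A \<and> finite L \<and>
               state_complexity A L = n \<and> syntactic_complexity A L = fact (n - 1)"
proof -
  define N where "N = {0..<n}"
  define S where "S i = (if i < n - 1 then {i<..<n} else {n-1})" for i :: nat
  define T where "T = PiE N S"
  have SN: "S i \<subseteq> N" for i using n1 by (auto simp: S_def N_def)
  have fT: "finite T" unfolding T_def by (rule finite_PiE) (auto simp: N_def S_def)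
  have cT: "card T = fact (n - 1)"
  proof -
    obtain m where m: "n = Suc m" using n1 by (cases n) auto
    have "card T = (\<Prod>i\<in>N. card (S i))" unfolding T_def by (rule card_PiE) (simp add: N_def)
    also have "\<dots> = (\<Prod>i<Suc m. card (S i))" by (simp add: N_def m lessThan_atLeast0)
    also have "\<dots> = (\<Prod>i<m. card (S i)) * card (S m)" by (rule prod.lessThan_Suc)
    also have "\<dots> = (\<Prod>i<m. (m - i))"
    proof -
      have "card (S m) = 1" by (simp add: S_def m)
      moreover have "(\<Prod>i<m. card (S i)) = (\<Prod>i<m. (m - i))"
        by (rule prod.cong) (auto simp: S_def m)
      ultimately show ?thesis by simp
    qed
    also have "\<dots> = fact m" by (rule prod_rev_fact)
    finally show ?thesis by (simp add: m)
  qed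
  obtain e where e: "bij_betw e {0..<card T} T" using ex_bij_betw_nat_finite[OF fT] by blast
  define A where "A = {0..<card T}"
  define sc where "sc = restrict (\<lambda>i. if i < n - 1 then Suc i else n - 1) N"
  have scT: "sc \<in> T" unfolding sc_def T_def
    by (auto simp: restrict_PiE_iff S_def N_def)
  have eimg: "e ` A = T" using e by (simp add: A_def bij_betw_def)
  obtain c where c: "c \<in> A" "e c = sc" using scT eimg by (metis imageE)
  have eT: "a \<in> A \<Longrightarrow> e a \<in> T" for a using eimg by blast
  have estep: "a \<in> A \<Longrightarrow> q < n \<Longrightarrow> e a q \<in> S q" for a q
    using eT[of a] by (auto simp: T_def N_def)
  have elt: "a \<in> A \<Longrightarrow> q < n \<Longrightarrow> e a q < n" for a q
    using estep[of a q] SN[of q] by (auto simp: N_def)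
  have esink: "a \<in> A \<Longrightarrow> e a (n - 1) = n - 1" for a
    using estep[of a "n - 1"] n1 by (simp add: S_def)
  have egt: "a \<in> A \<Longrightarrow> q < n - 1 \<Longrightarrow> q < e a q" for a q
    using estep[of a q] by (simp add: S_def)
  define dl where "dl q w = foldl (\<lambda>q a. e a q) q w" for q w
  have dl_Cons: "dl q (a # w) = dl (e a q) w" for q a w by (simp add: dl_def)
  have dl_app: "dl q (u @ v) = dl (dl q u) v" for q u v by (simp add: dl_def)
  have F0: "w \<in> lists A \<Longrightarrow> dl (n - 1) w = n - 1" for w
  proof (induction w)
    case Nil then show ?case by (simp add: dl_def)
  next
    case (Cons a w)
    then have "e a (n - 1) = n - 1" using esink by simp
    then show ?case using Cons by (simp only: dl_Cons) simp
  qed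
  have F1: "w \<in> lists A \<Longrightarrow> q < n \<Longrightarrow> dl q w < n" for w q
  proof (induction w arbitrary: q)
    case Nil then show ?case by (simp add: dl_def)
  next
    case (Cons a w) then show ?case by (simp add: dl_Cons elt)
  qed
  have F2: "w \<in> lists A \<Longrightarrow> q < n \<Longrightarrow> dl q w = n - 1 \<or> q + length w \<le> dl q w" for w q
  proof (induction w arbitrary: q)
    case Nil then show ?case by (simp add: dl_def)
  next
    case (Cons a w)
    show ?case
    proof (cases "q < n - 1")
      case True
      have "q < e a q" "e a q < n" using Cons True egt elt by auto
      then show ?thesis using Cons.IH[of "e a q"] Cons.prems by (auto simp: dl_Cons)
    next
      case False
      then have "q = n - 1" using Cons by simp
      then show ?thesis using Cons F0 esink by (simp add: dl_Cons)
    qed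
  qed
  have F3: "q < n \<Longrightarrow> dl q (replicate k c) = min (q + k) (n - 1)" for q k
  proof (induction k arbitrary: q)
    case 0 then show ?case by (simp add: dl_def)
  next
    case (Suc k)
    have "dl q (replicate (Suc k) c) = dl (sc q) (replicate k c)" by (simp add: dl_Cons c)
    also have "sc q = (if q < n - 1 then Suc q else n - 1)" using Suc by (simp add: sc_def N_def)
    finally show ?case using Suc n1 by auto
  qed
  have repA: "replicate k c \<in> lists A" for k using c by auto
  define L where "L = {w \<in> lists A. dl 0 w < n - 1}"
  have LA: "L \<subseteq> lists A" by (auto simp: L_def)
  have fA: "finite A" by (simp add: A_def)
  have Ane: "A \<noteq> {}" using c by auto
  have finL: "finite L"
  proof (rule finite_subset[OF _ finite_lists_length_le[OF fA, of n]])
    show "L \<subseteq> {ks. set ks \<subseteq> A \<and> length ks \<le> n}"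
    proof
      fix w assume w: "w \<in> L"
      then have "w \<in> lists A" "dl 0 w < n - 1" by (auto simp: L_def)
      then have "length w \<le> n" using F2[of w 0] n1 by auto
      then show "w \<in> {ks. set ks \<subseteq> A \<and> length ks \<le> n}" using \<open>w \<in> lists A\<close> by auto
    qed
  qed
  define M where "M q = {v \<in> lists A. dl q v < n - 1}" for q
  have lqM: "w \<in> lists A \<Longrightarrow> left_quotient A L w = M (dl 0 w)" for w
    by (auto simp: left_quotient_def L_def M_def dl_app)
  have QM: "left_quotient A L ` lists A = M ` N"
  proof
    show "left_quotient A L ` lists A \<subseteq> M ` N"
    proof
      fix K assume "K \<in> left_quotient A L ` lists A"
      then obtain w where w: "w \<in> lists A" "K = left_quotient A L w" by blast
      have "dl 0 w \<in> N" using F1[OF w(1), of 0] n1 by (simp add: N_def)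
      then show "K \<in> M ` N" using lqM[OF w(1)] w(2) by blast
    qed
  next
    show "M ` N \<subseteq> left_quotient A L ` lists A"
    proof
      fix K assume "K \<in> M ` N"
      then obtain q where q: "q < n" "K = M q" by (auto simp: N_def)
      have "dl 0 (replicate q c) = q" using F3[of 0 q] q n1 by simp
      then have "K = left_quotient A L (replicate q c)" using lqM[OF repA] q by simp
      then show "K \<in> left_quotient A L ` lists A" using repA by blast
    qed
  qed
  have neqM: "q < q' \<Longrightarrow> q' < n \<Longrightarrow> M q \<noteq> M q'" for q q'
  proof -
    assume qq: "q < q'" "q' < n"
    define v where "v = replicate (n - 2 - q) c"
    have "dl q v = n - 2" using F3[of q "n - 2 - q"] qq by (simp add: v_def)
    then have "v \<in> M q" using qq by (simp add: M_def v_def repA)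
    moreover have "dl q' v = n - 1" using F3[of q' "n - 2 - q"] qq by (simp add: v_def)
    then have "v \<notin> M q'" by (simp add: M_def)
    ultimately show ?thesis by blast
  qed
  have injM: "inj_on M N"
  proof (rule inj_onI)
    fix q q' assume "q \<in> N" "q' \<in> N" "M q = M q'"
    then show "q = q'" using neqM by (metis N_def atLeastLessThan_iff linorder_neqE_nat)
  qed
  have scN: "state_complexity A L = n"
    unfolding state_complexity_def QM using card_image[OF injM] by (simp add: N_def)
  define R where "R = syntactic_cong A L"
  have P1: "finite ((lists A - {[]}) // R) \<and> syntactic_complexity A L \<le> fact (n - 1)"
    using part1_finite[OF LA finL Ane] QM scN by (simp add: R_def N_def)
  have injR: "inj_on (\<lambda>a. R `` {[a]}) A"
  proof (rule inj_onI)
    fix a b assume a: "a \<in> A" and b: "b \<in> A" and eq: "R `` {[a]} = R `` {[b]}"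
    have "([b], [b]) \<in> R" using b by (simp add: R_def syntactic_cong_def)
    then have "([a], [b]) \<in> R" using eq by blast
    then have ab: "\<And>u v. u \<in> lists A \<Longrightarrow> v \<in> lists A \<Longrightarrow> (u @ [a] @ v \<in> L \<longleftrightarrow> u @ [b] @ v \<in> L)"
      by (simp add: R_def syntactic_cong_def)
    have "e a = e b"
    proof
      fix i show "e a i = e b i"
      proof (cases "i \<in> N")
        case True
        have di: "dl 0 (replicate i c) = i" using F3[of 0 i] True n1 by (simp add: N_def)
        have Meq: "M (e a i) = M (e b i)"
        proof (rule set_eqI)
          fix v
          show "v \<in> M (e a i) \<longleftrightarrow> v \<in> M (e b i)"
          proof (cases "v \<in> lists A")
            case True
            have da: "dl 0 (replicate i c @ [a] @ v) = dl (e a i) v"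
              by (simp only: dl_app di append_Cons append_Nil dl_Cons)
            have db: "dl 0 (replicate i c @ [b] @ v) = dl (e b i) v"
              by (simp only: dl_app di append_Cons append_Nil dl_Cons)
            have la: "replicate i c @ [a] @ v \<in> lists A" using True a repA[of i] by simp
            have lb: "replicate i c @ [b] @ v \<in> lists A" using True b repA[of i] by simp
            have "v \<in> M (e a i) \<longleftrightarrow> replicate i c @ [a] @ v \<in> L"
              unfolding M_def L_def using True la da by simp
            also have "\<dots> \<longleftrightarrow> replicate i c @ [b] @ v \<in> L" using ab[OF repA True] .
            also have "\<dots> \<longleftrightarrow> v \<in> M (e b i)"
              unfolding M_def L_def using True lb db by simp
            finally show ?thesis .
          qed (simp add: M_def)
        qed
        have "e a i \<in> N" "e b i \<in> N" using elt a b True by (auto simp: N_def)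
        then show ?thesis using inj_onD[OF injM Meq] by blast
      next
        case False
        have "e a \<in> PiE N S" "e b \<in> PiE N S" using eT[OF a] eT[OF b] by (simp_all add: T_def)
        then show ?thesis using PiE_arb[OF _ False] by metis
      qed
    qed
    then show "a = b" using e a b by (metis A_def bij_betw_def inj_onD)
  qed
  have sub: "(\<lambda>a. R `` {[a]}) ` A \<subseteq> (lists A - {[]}) // R"
    by (auto intro!: quotientI)
  have "card A \<le> card ((lists A - {[]}) // R)"
    using card_inj_on_le[OF injR sub] P1 by simp
  then have "fact (n - 1) \<le> syntactic_complexity A L"
    using cT by (simp add: A_def syntactic_complexity_def R_def)
  then have "syntactic_complexity A L = fact (n - 1)" using P1 by simp
  then show ?thesis using fA Ane LA finL scN by blast
qed


theorem theorem1:
  shows "(\<forall>(A :: 'a set) (L :: 'a list set) (n :: nat).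
            finite A \<and> A \<noteq> {} \<and> L \<subseteq> lists A \<and> regular_lang A L \<and>
            (finite L \<or> cofinite_lang A L) \<and> n \<ge> 1 \<and> state_complexity A L = n
            \<longrightarrow> syntactic_complexity A L \<le> fact (n - 1))
       \<and> (\<forall>n :: nat. n \<ge> 1 \<longrightarrow>
            (\<exists>(A :: nat set) (L :: nat list set).
               finite A \<and> A \<noteq> {} \<and> L \<subseteq> lists A \<and> finite L \<and>
               state_complexity A L = n \<and> syntactic_complexity A L = fact (n - 1)))"
  using part1 part2 by blast

end
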